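(* Let $z\in\mathcal F_\infty$, and write its cycles in $\mathbb P$ as $(a_i,b_i)$ with $a_i<b_i$ and $a_1<a_2<\cdots$. Let $u$ be the permutation of $\mathbb P$ whose one-line representation is $a_1b_1a_2b_2a_3b_3\cdots$, and let $\beta=u^{-1}$. Then the set of FPF-visible inversions of $z$ equals $\mathrm{Inv}(\beta)=\{(i,j):i<j,\ \beta(i)>\beta(j)\}$.
   Context: Let $S_\infty$ be the group of finitely supported permutations of $\mathbb P=\{1,2,\dots\}$. Let $\Theta(i)=i-(-1)^i$ and $\mathcal F_\infty=\{w^{-1}\Theta w:w\in S_\infty\}$. A pair $(i,j)\in\mathbb Z\times\mathbb Z$ is an FPF-visible inversion of $z$ if $i<j$ and $z(j)<\min\{i,z(i)\}$. *)

theory Defs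
  imports Main
begin

text \<open>Permutations of P = {1,2,...} are modelled as functions nat => nat that
  fix 0 and restrict to bijections of {1,2,...}.\<close>

definition Theta :: "nat \<Rightarrow> nat" where
  "Theta i = (if i = 0 then 0 else if even i then i - 1 else i + 1)"

definition S_inf :: "(nat \<Rightarrow> nat) set" where
  "S_inf = {w. bij w \<and> w 0 = 0 \<and> finite {i. w i \<noteq> i}}"

definition F_inf :: "(nat \<Rightarrow> nat) set" where
  "F_inf = {inv w \<circ> Theta \<circ> w | w. w \<in> S_inf}"

text \<open>FPF-visible inversions (restricted to positive indices, where z is defined).\<close>
definition fpf_visible_inv :: "(nat \<Rightarrow> nat) \<Rightarrow> (nat \<times> nat) set" where
  "fpf_visible_inv z = {(i, j). 0 < i \<and> i < j \<and> z j < min i (z i)}"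

definition Inv :: "(nat \<Rightarrow> nat) \<Rightarrow> (nat \<times> nat) set" where
  "Inv \<beta> = {(i, j). 0 < i \<and> i < j \<and> \<beta> i > \<beta> j}"

text \<open>One-line word a_1 b_1 a_2 b_2 ...; sequences a, b are indexed from 0,
  so position 2k+1 holds a k and position 2k+2 holds b k.\<close>
definition one_line :: "(nat \<Rightarrow> nat) \<Rightarrow> (nat \<Rightarrow> nat) \<Rightarrow> nat \<Rightarrow> nat" where
  "one_line a b n = (if n = 0 then 0 else if odd n then a ((n - 1) div 2) else b ((n - 2) div 2))"

end

theory Submission
  imports Defs
begin

lemma Theta_Theta: "Theta (Theta y) = y"
proof (cases "y = 0")
  case False
  show ?thesis
  proof (cases "even y")
    case True
    then have "odd (y - 1)" "y - 1 \<noteq> 0" using False by (auto elim: evenE)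
    then show ?thesis using True False unfolding Theta_def by simp
  next
    case f: False
    then show ?thesis using False unfolding Theta_def by simp
  qed
qed (simp add: Theta_def)

lemma nat_shape: "(n::nat) = 0 \<or> (\<exists>k. n = 2*k+1) \<or> (\<exists>k. n = 2*k+2)"
proof (cases "n = 0")
  case False
  show ?thesis
  proof (cases "odd n")
    case True then show ?thesis by (metis oddE)
  next
    case f: False
    then obtain m where "n = 2*m" by blast
    with False have "n = 2*(m-1)+2" by auto
    then show ?thesis by blast
  qed
qed simp

theorem lemma3p4:
  fixes z a b :: "nat \<Rightarrow> nat"
  assumes "z \<in> F_inf"
    and "\<And>k. 0 < a k \<and> a k < b k \<and> z (a k) = b k"
    and "strict_mono a"
    and "\<And>i. 0 < i \<Longrightarrow> \<exists>k. i = a k \<or> i = b k"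
  shows "fpf_visible_inv z = Inv (inv (one_line a b))"
proof -
  have zz: "z (z x) = x" for x
  proof -
    from assms(1) obtain w where w: "bij w" "z = inv w \<circ> Theta \<circ> w"
      unfolding F_inf_def S_inf_def by auto
    have "z (z x) = inv w (Theta (Theta (w x)))"
      using w by (simp add: bij_is_surj surj_f_inv_f)
    also have "\<dots> = x" using w by (simp add: Theta_Theta bij_is_inj)
    finally show ?thesis .
  qed
  have A: "0 < a k" "a k < b k" "z (a k) = b k" for k using assms(2) by auto
  have B: "z (b k) = a k" for k using zz A(3) by metis
  have amono: "a k < a l \<longleftrightarrow> k < l" for k l using assms(3) strict_mono_less by blast
  have binj: "b k = b l \<Longrightarrow> k = l" for k l
    using B assms(3) strict_mono_eq by metis
  have ab: "a k \<noteq> b l" for k l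
  proof
    assume h: "a k = b l"
    have "b k = a l" using A(3)[of k] B[of l] h by simp
    then show False using A[of k] A[of l] h by simp
  qed
  define u where "u = one_line a b"
  have u1: "u (2*k+1) = a k" for k unfolding u_def one_line_def by simp
  have u2: "u (2*k+2) = b k" for k unfolding u_def one_line_def by simp
  have u0: "u 0 = 0" unfolding u_def one_line_def by simp
  have uinj: "inj u"
  proof (rule injI)
    fix n m assume h: "u n = u m"
    have z0: "u x = 0 \<longleftrightarrow> x = 0" for x
      using nat_shape[of x] u0 u1 u2 A by (metis gr_implies_not0 less_trans)
    show "n = m"
    proof (cases "n = 0 \<or> m = 0")
      case True then show ?thesis using z0 h by metis
    next
      case False
    show ?thesis
      using nat_shape[of n] nat_shape[of m] False
    proof (elim disjE exE)
      fix k l assume "n = 2*k+1" "m = 2*l+1" then show ?thesis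
        using h u1 assms(3) strict_mono_eq by metis
    next
      fix k l assume "n = 2*k+2" "m = 2*l+2" then show ?thesis
        using h u2 binj by metis
    next
      fix k l assume "n = 2*k+1" "m = 2*l+2" then show ?thesis
        using h u1 u2 ab by metis
    next
      fix k l assume "n = 2*k+2" "m = 2*l+1" then show ?thesis
        using h u1 u2 ab by metis
    qed simp_all
    qed
  qed
  have ia: "inv u (a k) = 2*k+1" for k using uinj u1 by (metis inv_f_f)
  have ib: "inv u (b k) = 2*k+2" for k using uinj u2 by (metis inv_f_f)
  have key: "z j < min i (z i) \<longleftrightarrow> inv u i > inv u j" if ij: "0 < i" "i < j" for i j
  proof -
    obtain k where k: "i = a k \<or> i = b k" using assms(4)[OF ij(1)] by blast
    have "0 < j" using ij by simp
    then obtain l where l: "j = a l \<or> j = b l" using assms(4) by blast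
    show ?thesis using k l
    proof (elim disjE)
      assume "i = a k" "j = a l" then show ?thesis
        using ij A[of k] A[of l] ia amono[of k l] by auto
    next
      assume "i = a k" "j = b l" then show ?thesis
        using ij A[of k] A[of l] B ia ib amono[of l k] by auto
    next
      assume "i = b k" "j = a l" then show ?thesis
        using ij A[of k] A[of l] B ia ib amono[of k l] by auto
    next
      assume "i = b k" "j = b l" then show ?thesis
        using ij A[of k] A[of l] B ia ib amono[of l k] by auto
    qed
  qed
  show ?thesis unfolding fpf_visible_inv_def Inv_def u_def[symmetric]
    using key by auto
qed

end
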